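(* Let $s=(x,y,u,v)\in\mathbb{R}^4$ and write $W^k(s)=(x^{(k)},y^{(k)},u^{(k)},v^{(k)})$. (i) If one of the following holds: 1) $s\in P_0$; 2) $s\in Q_4$ and there exists $k\ge0$ with $y^{(k)}v^{(k)}\neq0$; 3) $s\in\mathcal N$ and $W(s)\in P_0$; 4) $s\in\mathcal N_0$ and $W^2(s)\in P_0$; 5) $s\in\mathcal N_1$ and $W^2(s)\in P_0$ — then $\lim_{n\to\infty}W^n(s)=(0,0,0,0)$. (ii) If one of the following holds: a) $s\in F$; b) $s\in\mathcal N$ and $W(s)\in F$; c) $s\in\mathcal N_0$ and $W^2(s)\in F$; d) $s\in\mathcal N_1$ and $W^2(s)\in F$ — then $W^n(s)\to+\infty$ (at least one coordinate of $W^n(s)$ tends to $+\infty$).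
   Context: $W:\mathbb{R}^4\to\mathbb{R}^4$ is the map $W(x,y,u,v)=(x',y',u',v')$ with $x'=\tfrac12 xu+\tfrac14 yu$, $y'=\tfrac12 xv+\tfrac14 yu+\tfrac13 yv$, $u'=\tfrac12 xu+\tfrac12 xv+\tfrac14 yu+\tfrac13 yv$, $v'=\tfrac14 yu+\tfrac13 yv$. $W^k$ denotes the $k$-fold iterate ($W^0$ the identity). Sets: $P=\{(x,y,u,v): x,y,u,v\ge0\}$; $Q_4=\{(x,y,u,v)\in P: x+y+u+v\le4\}$; $\mathcal N=\{(x,y,u,v): x,y,u,v\le0\}$; $\mathcal N_0=\{(x,y,u,v): x\le0,y\le0,u\ge0,v\ge0\}$; $\mathcal N_1=\{(x,y,u,v): x\ge0,y\ge0,u\le0,v\le0\}$; $P_0=\{(x,y,u,v)\in P: (x+y)(u+v)<4\}$; $F=\{(x,y,u,v)\in P: x+y+u+v>4,\ \max\{\tfrac{xu}{4},\tfrac{yu}{16},\tfrac{yv}{9}\}>1\}$. *)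

theory Defs
  imports "HOL-Analysis.Analysis"
begin

type_synonym state = "real \<times> real \<times> real \<times> real"

definition W :: "state \<Rightarrow> state" where
  "W s = (case s of (x, y, u, v) \<Rightarrow>
     (x* u/2 + y* u/4,
      x* v/2 + y* u/4 + y* v/3,
      x* u/2 + x* v/2 + y* u/4 + y* v/3,
      y* u/4 + y* v/3))"

definition P :: "state set" where
  "P = {(x, y, u, v). x \<ge> 0 \<and> y \<ge> 0 \<and> u \<ge> 0 \<and> v \<ge> 0}"

definition Q4 :: "state set" where
  "Q4 = {(x, y, u, v). (x, y, u, v) \<in> P \<and> x + y + u + v \<le> 4}"

definition NN :: "state set" where
  "NN = {(x, y, u, v). x \<le> 0 \<and> y \<le> 0 \<and> u \<le> 0 \<and> v \<le> 0}"

definition NN0 :: "state set" where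
  "NN0 = {(x, y, u, v). x \<le> 0 \<and> y \<le> 0 \<and> u \<ge> 0 \<and> v \<ge> 0}"

definition NN1 :: "state set" where
  "NN1 = {(x, y, u, v). x \<ge> 0 \<and> y \<ge> 0 \<and> u \<le> 0 \<and> v \<le> 0}"

definition P0 :: "state set" where
  "P0 = {(x, y, u, v). (x, y, u, v) \<in> P \<and> (x + y) * (u + v) < 4}"

definition F :: "state set" where
  "F = {(x, y, u, v). (x, y, u, v) \<in> P \<and> x + y + u + v > 4 \<and>
          Max {x* u/4, y* u/16, y* v/9} > 1}"

definition cx :: "state \<Rightarrow> real" where "cx s = fst s"
definition cy :: "state \<Rightarrow> real" where "cy s = fst (snd s)"
definition cu :: "state \<Rightarrow> real" where "cu s = fst (snd (snd s))"
definition cv :: "state \<Rightarrow> real" where "cv s = snd (snd (snd s))"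

end

theory Submission
  imports Defs
begin

definition pp :: "state \<Rightarrow> real" where
  "pp s = (cx s + cy s) * (cu s + cv s)"

definition RR :: "state \<Rightarrow> real" where
  "RR s = max (max (cx s * cu s / 4) (cy s * cu s / 16)) (cy s * cv s / 9)"

lemma W_tuple: "W (x,y,u,v) = (x* u/2 + y* u/4, x* v/2 + y* u/4 + y* v/3,
      x* u/2 + x* v/2 + y* u/4 + y* v/3, y* u/4 + y* v/3)"
  by (simp add: W_def)

lemma inP: "(x,y,u,v) \<in> P \<longleftrightarrow> x \<ge> 0 \<and> y \<ge> 0 \<and> u \<ge> 0 \<and> v \<ge> 0"
  by (simp add: P_def)

lemma P_W: "s \<in> P \<Longrightarrow> W s \<in> P"
  by (cases s) (auto simp: W_tuple inP)

lemma P_iter: "s \<in> P \<Longrightarrow> (W ^^ n) s \<in> P"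
  by (induction n) (auto simp: P_W)

lemma pp_nonneg: "s \<in> P \<Longrightarrow> 0 \<le> pp s"
  by (cases s) (auto simp: inP pp_def cx_def cy_def cu_def cv_def)

lemma pp_step: "s \<in> P \<Longrightarrow> pp (W s) \<le> pp s ^ 2 / 4"
proof (cases s)
  case (fields x y u v)
  assume "s \<in> P"
  then have h: "x \<ge> 0" "y \<ge> 0" "u \<ge> 0" "v \<ge> 0" using fields by (auto simp: inP)
  let ?m = "(x+y)*(u+v)/2"
  have "pp (W s) = ?m ^ 2 - (y * v) ^ 2 / 36"
    using fields by (simp add: W_tuple pp_def cx_def cy_def cu_def cv_def power2_eq_square algebra_simps)
  moreover have "pp s = 2 * ?m" using fields by (simp add: pp_def cx_def cy_def cu_def cv_def)
  moreover have "0 \<le> (y * v) ^ 2" by simp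
  ultimately have "pp (W s) \<le> ?m ^ 2" by linarith
  then show ?thesis using \<open>pp s = 2 * ?m\<close> by (simp add: power2_eq_square)
qed

lemma coord_bound:
  assumes "s \<in> P" and "c \<in> {cx, cy, cu, cv}"
  shows "0 \<le> c (W s) \<and> c (W s) \<le> pp s"
proof (cases s)
  case (fields x y u v)
  then have h: "x \<ge> 0" "y \<ge> 0" "u \<ge> 0" "v \<ge> 0" using assms by (auto simp: inP)
  have a: "0 \<le> x * u" "0 \<le> x * v" "0 \<le> y * u" "0 \<le> y * v" using h by auto
  have "pp s = x * u + x * v + y * u + y * v" using fields by (simp add: pp_def cx_def cy_def cu_def cv_def algebra_simps)
  then show ?thesis using assms(2) fields a
    by (auto simp: W_tuple cx_def cy_def cu_def cv_def)
qed

lemma conv_P0: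
  assumes "s \<in> P0"
  shows "((\<lambda>n. (W ^^ n) s) \<longlongrightarrow> (0, 0, 0, 0)) sequentially"
proof -
  have sP: "s \<in> P" using assms by (cases s) (auto simp: P0_def)
  have p0: "pp s < 4" using assms by (cases s) (auto simp: P0_def pp_def cx_def cy_def cu_def cv_def)
  define q where "q n = pp ((W ^^ n) s) / 4" for n
  have qnn: "0 \<le> q n" for n using pp_nonneg[OF P_iter[OF sP]] by (simp add: q_def)
  have qstep: "q (Suc n) \<le> q n ^ 2" for n
    using pp_step[OF P_iter[OF sP, of n]] by (simp add: q_def power2_eq_square)
  have q01: "q 0 < 1" using p0 by (simp add: q_def)
  have qb: "q n \<le> q 0 ^ Suc n" for n
  proof (induction n)
    case 0 then show ?case by simp
  next
    case (Suc n)
    have "q n \<le> q 0" using Suc qnn[of 0] q01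
      by (meson order.trans power_le_one_iff less_imp_le power_Suc_le_self)
    then have "q n ^ 2 \<le> q 0 ^ Suc n * q 0"
      using Suc qnn[of n] by (simp add: power2_eq_square mult_mono)
    then show ?case using qstep[of n] by (simp add: mult.commute)
  qed
  have lim0: "(\<lambda>n. 4 * q 0 ^ Suc n) \<longlonglongrightarrow> 0"
  proof -
    have "(\<lambda>n. q 0 ^ n) \<longlonglongrightarrow> 0" using qnn[of 0] q01 by (intro LIMSEQ_power_zero) auto
    then have "(\<lambda>n. q 0 ^ Suc n) \<longlonglongrightarrow> 0" by (rule LIMSEQ_Suc)
    then show ?thesis using tendsto_mult_right_zero by blast
  qed
  have cl: "(\<lambda>n. c ((W ^^ n) s)) \<longlonglongrightarrow> 0" if c: "c \<in> {cx, cy, cu, cv}" for c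
  proof -
    have "(\<lambda>n. c ((W ^^ Suc n) s)) \<longlonglongrightarrow> 0"
    proof (rule real_tendsto_sandwich[OF _ _ tendsto_const lim0])
      show "\<forall>\<^sub>F n in sequentially. 0 \<le> c ((W ^^ Suc n) s)"
        using coord_bound[OF P_iter[OF sP] c] by simp
      show "\<forall>\<^sub>F n in sequentially. c ((W ^^ Suc n) s) \<le> 4 * q 0 ^ Suc n"
      proof (rule always_eventually, rule allI)
        fix n
        have "c ((W ^^ Suc n) s) \<le> pp ((W ^^ n) s)" using coord_bound[OF P_iter[OF sP, of n] c] by simp
        also have "\<dots> = 4 * q n" by (simp add: q_def)
        also have "\<dots> \<le> 4 * q 0 ^ Suc n" using qb[of n] by simp
        finally show "c ((W ^^ Suc n) s) \<le> 4 * q 0 ^ Suc n" .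
      qed
    qed
    then show ?thesis by (rule filterlim_sequentially_Suc[THEN iffD1])
  qed
  have eq: "(\<lambda>n. (W ^^ n) s) = (\<lambda>n. (cx ((W ^^ n) s), cy ((W ^^ n) s), cu ((W ^^ n) s), cv ((W ^^ n) s)))"
    by (simp add: cx_def cy_def cu_def cv_def)
  show ?thesis unfolding eq
    by (intro tendsto_Pair cl) auto
qed


lemma conv_shift:
  assumes "(W ^^ j) s \<in> P0"
  shows "((\<lambda>n. (W ^^ n) s) \<longlongrightarrow> (0, 0, 0, 0)) sequentially"
proof -
  have "(\<lambda>n. (W ^^ n) ((W ^^ j) s)) \<longlonglongrightarrow> (0, 0, 0, 0)" by (rule conv_P0[OF assms])
  then have "(\<lambda>n. (W ^^ (n + j)) s) \<longlonglongrightarrow> (0, 0, 0, 0)" by (simp add: funpow_add)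
  then show ?thesis by (rule LIMSEQ_offset)
qed

lemma Q4_step:
  assumes "s \<in> Q4" "s \<notin> P0"
  shows "W s \<in> Q4 \<and> (cy s * cv s \<noteq> 0 \<longrightarrow> W s \<in> P0)"
proof (cases s)
  case (fields x y u v)
  have h: "x \<ge> 0" "y \<ge> 0" "u \<ge> 0" "v \<ge> 0" "x + y + u + v \<le> 4"
    using assms fields by (auto simp: Q4_def inP)
  have g: "(x + y) * (u + v) \<ge> 4" using assms fields h by (auto simp: P0_def inP)
  have ab: "x + y = 2 \<and> u + v = 2"
  proof -
    have "(x + y - (u + v)) ^ 2 = (x + y + u + v) ^ 2 - 4 * ((x + y) * (u + v))"
      by (simp add: power2_eq_square algebra_simps)
    also have "\<dots> \<le> 0"
    proof -
      have "(x + y + u + v) ^ 2 \<le> 4 ^ 2" using h by (intro power_mono) auto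
      then show ?thesis using g by simp
    qed
    finally have "(x + y - (u + v)) ^ 2 \<le> 0" .
    then have "x + y = u + v" by simp
    moreover have "(x + y) * (x + y) \<le> 2 * (x + y)"
      using h \<open>x + y = u + v\<close> by (intro mult_right_mono) auto
    ultimately show ?thesis using g h by auto
  qed
  have WP: "W s \<in> P" using P_W assms by (auto simp: Q4_def fields)
  have sum: "(x * u/2 + y * u/4) + (x * v/2 + y * u/4 + y * v/3) +
      (x * u/2 + x * v/2 + y * u/4 + y * v/3) + (y * u/4 + y * v/3) = (x + y) * (u + v)"
    by (simp add: algebra_simps)
  have q4: "W s \<in> Q4" using WP sum ab by (auto simp: Q4_def fields W_tuple)
  have "pp (W s) = 4 - (y * v) ^ 2 / 36"
  proof -
    have "pp (W s) = ((x+y)*(u+v)/2) ^ 2 - (y * v) ^ 2 / 36"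
      using fields by (simp add: W_tuple pp_def cx_def cy_def cu_def cv_def power2_eq_square algebra_simps)
    then show ?thesis using ab by simp
  qed
  moreover have "cy s * cv s \<noteq> 0 \<Longrightarrow> (y * v) ^ 2 > 0" using fields by (simp add: cy_def cv_def)
  ultimately have "cy s * cv s \<noteq> 0 \<Longrightarrow> pp (W s) < 4" by linarith
  moreover have "W s \<in> P" by (rule WP)
  ultimately have "cy s * cv s \<noteq> 0 \<Longrightarrow> W s \<in> P0"
    using fields by (auto simp: P0_def W_tuple pp_def cx_def cy_def cu_def cv_def inP)
  then show ?thesis using q4 by blast
qed

lemma Q4_iter:
  assumes "s \<in> Q4" "cy ((W ^^ k) s) * cv ((W ^^ k) s) \<noteq> 0"
  shows "\<exists>j. (W ^^ j) s \<in> P0"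
  using assms
proof (induction k arbitrary: s)
  case 0
  show ?case
  proof (cases "s \<in> P0")
    case True then show ?thesis by (intro exI[of _ 0]) simp
  next
    case False
    then have "W s \<in> P0" using Q4_step[OF "0.prems"(1) False] "0.prems"(2) by simp
    then show ?thesis by (intro exI[of _ 1]) simp
  qed
next
  case (Suc k)
  show ?case
  proof (cases "s \<in> P0")
    case True then show ?thesis by (intro exI[of _ 0]) simp
  next
    case False
    then have "W s \<in> Q4" using Q4_step[OF Suc.prems(1) False] by simp
    moreover have "cy ((W ^^ k) (W s)) * cv ((W ^^ k) (W s)) \<noteq> 0"
      using Suc.prems(2) by (simp add: funpow_Suc_right del: funpow.simps)
    ultimately obtain j where "(W ^^ j) (W s) \<in> P0" using Suc.IH by blast
    then have "(W ^^ Suc j) s \<in> P0" by (simp add: funpow_Suc_right del: funpow.simps)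
    then show ?thesis by blast
  qed
qed

lemma RR_step:
  assumes "s \<in> P"
  shows "RR (W s) \<ge> RR s ^ 2 \<and> cu (W s) \<ge> 2 * RR s \<and> RR s \<ge> 0"
proof (cases s)
  case (fields x y u v)
  have h: "x \<ge> 0" "y \<ge> 0" "u \<ge> 0" "v \<ge> 0" using assms fields by (auto simp: inP)
  have a: "0 \<le> x * u" "0 \<le> x * v" "0 \<le> y * u" "0 \<le> y * v"
     "0 \<le> u * x" "0 \<le> v * x" "0 \<le> u * y" "0 \<le> v * y" using h by auto
  define x' where "x' = x * u/2 + y * u/4"
  define y' where "y' = x * v/2 + y * u/4 + y * v/3"
  define u' where "u' = x * u/2 + x * v/2 + y * u/4 + y * v/3"
  define v' where "v' = y * u/4 + y * v/3"
  have Ws: "W s = (x', y', u', v')" using fields by (simp add: W_tuple x'_def y'_def u'_def v'_def)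
  have R1: "RR (W s) \<ge> x' * u' / 4" "RR (W s) \<ge> y' * v' / 9"
    by (auto simp: RR_def Ws cx_def cy_def cu_def cv_def)
  have i1: "x' * u' \<ge> (x * u / 2) * (x * u / 2)"
    by (rule mult_mono) (use a in \<open>auto simp: x'_def u'_def\<close>)
  have i2: "x' * u' \<ge> (y * u / 4) * (y * u / 4)"
    by (rule mult_mono) (use a in \<open>auto simp: x'_def u'_def\<close>)
  have i3: "y' * v' \<ge> (y * v / 3) * (y * v / 3)"
    by (rule mult_mono) (use a in \<open>auto simp: y'_def v'_def\<close>)
  have Rs: "RR s = max (max (x * u / 4) (y * u / 16)) (y * v / 9)"
    using fields by (simp add: RR_def cx_def cy_def cu_def cv_def)
  have A: "RR (W s) \<ge> (x * u / 4) ^ 2"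
  proof -
    have "(x * u / 4) ^ 2 = (x * u / 2) * (x * u / 2) / 4" by (simp add: power2_eq_square)
    also have "\<dots> \<le> x' * u' / 4" by (rule divide_right_mono[OF i1]) simp
    finally show ?thesis using R1(1) by linarith
  qed
  have B: "RR (W s) \<ge> (y * u / 16) ^ 2"
  proof -
    have e1: "(y * u / 16) ^ 2 = (y * u) ^ 2 / 256" by (simp add: power2_eq_square)
    have e2: "(y * u / 4) * (y * u / 4) / 4 = (y * u) ^ 2 / 64" by (simp add: power2_eq_square)
    have e3: "0 \<le> (y * u) ^ 2" by (rule zero_le_power2)
    have "(y * u / 16) ^ 2 \<le> (y * u / 4) * (y * u / 4) / 4"
      unfolding e1 e2 using e3 by linarith
    also have "\<dots> \<le> x' * u' / 4" by (rule divide_right_mono[OF i2]) simp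
    finally show ?thesis using R1(1) by linarith
  qed
  have C: "RR (W s) \<ge> (y * v / 9) ^ 2"
  proof -
    have "(y * v / 9) ^ 2 = (y * v / 3) * (y * v / 3) / 9" by (simp add: power2_eq_square)
    also have "\<dots> \<le> y' * v' / 9" by (rule divide_right_mono[OF i3]) simp
    finally show ?thesis using R1(2) by linarith
  qed
  have "RR s = x * u / 4 \<or> RR s = y * u / 16 \<or> RR s = y * v / 9"
    unfolding Rs by (simp add: max_def)
  then have c1: "RR s ^ 2 \<le> RR (W s)"
  proof (elim disjE)
    assume "RR s = x * u / 4" then show ?thesis using A by (simp only:)
  next
    assume "RR s = y * u / 16" then show ?thesis using B by (simp only:)
  next
    assume "RR s = y * v / 9" then show ?thesis using C by (simp only:)
  qed
  have cuW: "cu (W s) = u'" by (simp add: Ws cu_def)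
  have "u' \<ge> 2 * (x * u / 4)" "u' \<ge> 2 * (y * u / 16)" "u' \<ge> 2 * (y * v / 9)"
  proof -
    have e: "u' = x * u / 2 + x * v / 2 + y * u / 4 + y * v / 3" by (simp add: u'_def)
    have f: "0 \<le> x * v / 2" "0 \<le> y * u / 4" "0 \<le> y * v / 3" "0 \<le> x * u / 2"
      using a by simp_all
    show "u' \<ge> 2 * (x * u / 4)" "u' \<ge> 2 * (y * u / 16)" "u' \<ge> 2 * (y * v / 9)"
      using e f by linarith+
  qed
  then have c2: "cu (W s) \<ge> 2 * RR s"
    using \<open>RR s = x * u / 4 \<or> RR s = y * u / 16 \<or> RR s = y * v / 9\<close> cuW
    by (elim disjE) (simp only:)+
  have c3: "RR s \<ge> 0" unfolding Rs using a by simp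
  show ?thesis using c1 c2 c3 by blast
qed

lemma div_F:
  assumes "s \<in> F"
  shows "filterlim (\<lambda>n. cu ((W ^^ n) s)) at_top sequentially"
proof -
  have sP: "s \<in> P" using assms by (cases s) (auto simp: F_def)
  have r0: "RR s > 1" using assms by (cases s) (auto simp: F_def RR_def cx_def cy_def cu_def cv_def)
  define r where "r n = RR ((W ^^ n) s)" for n
  have st: "r (Suc n) \<ge> r n ^ 2" "cu ((W ^^ Suc n) s) \<ge> 2 * r n" for n
    using RR_step[OF P_iter[OF sP, of n]] by (auto simp: r_def)
  have lb: "r n \<ge> r 0 + real n * (r 0 - 1)" for n
  proof (induction n)
    case 0 then show ?case by simp
  next
    case (Suc n)
    have "real n * (r 0 - 1) \<ge> 0" using r0 by (simp add: r_def)
    then have rn: "r n \<ge> r 0" using Suc by linarith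
    have "1 * (r 0 - 1) \<le> r n * (r n - 1)"
      by (rule mult_mono) (use rn r0 in \<open>auto simp: r_def\<close>)
    then have "r n ^ 2 \<ge> r n + (r 0 - 1)" by (simp add: power2_eq_square algebra_simps)
    moreover have "real (Suc n) * (r 0 - 1) = real n * (r 0 - 1) + (r 0 - 1)" by (simp add: algebra_simps)
    ultimately show ?case using st(1)[of n] Suc by linarith
  qed
  have lim: "filterlim (\<lambda>n. real n * (r 0 - 1)) at_top sequentially"
  proof -
    have "filterlim (\<lambda>n. (r 0 - 1) * real n) at_top sequentially"
      by (rule filterlim_tendsto_pos_mult_at_top[OF tendsto_const _ filterlim_real_sequentially])
         (use r0 in \<open>simp add: r_def\<close>)
    then show ?thesis by (simp add: mult.commute)
  qed
  have "filterlim (\<lambda>n. cu ((W ^^ Suc n) s)) at_top sequentially"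
  proof (rule filterlim_at_top_mono[OF lim], rule always_eventually, rule allI)
    fix n
    have "real n * (r 0 - 1) \<le> r n" using lb[of n] r0 by (simp add: r_def)
    also have "\<dots> \<le> 2 * r n" using RR_step[OF P_iter[OF sP, of n]] by (simp add: r_def)
    also have "\<dots> \<le> cu ((W ^^ Suc n) s)" by (rule st(2))
    finally show "real n * (r 0 - 1) \<le> cu ((W ^^ Suc n) s)" .
  qed
  then show ?thesis by (rule filterlim_sequentially_Suc[THEN iffD1])
qed

lemma div_shift:
  assumes "(W ^^ j) s \<in> F"
  shows "filterlim (\<lambda>n. cu ((W ^^ n) s)) at_top sequentially"
  using assms
proof (induction j arbitrary: s)
  case 0 then show ?case using div_F by simp
next
  case (Suc j)
  have "(W ^^ j) (W s) \<in> F" using Suc.prems by (simp add: funpow_Suc_right del: funpow.simps)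
  then have "filterlim (\<lambda>n. cu ((W ^^ n) (W s))) at_top sequentially" by (rule Suc.IH)
  then have "filterlim (\<lambda>n. cu ((W ^^ Suc n) s)) at_top sequentially"
    by (simp add: funpow_Suc_right del: funpow.simps)
  then show ?case by (rule filterlim_sequentially_Suc[THEN iffD1])
qed

theorem theorem3p1:
  fixes s :: state
  shows "(s \<in> P0
          \<or> (s \<in> Q4 \<and> (\<exists>k. cy ((W ^^ k) s) * cv ((W ^^ k) s) \<noteq> 0))
          \<or> (s \<in> NN \<and> W s \<in> P0)
          \<or> (s \<in> NN0 \<and> (W ^^ 2) s \<in> P0)
          \<or> (s \<in> NN1 \<and> (W ^^ 2) s \<in> P0)
         \<longrightarrow> ((\<lambda>n. (W ^^ n) s) \<longlongrightarrow> (0, 0, 0, 0)) sequentially)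
       \<and> (s \<in> F
          \<or> (s \<in> NN \<and> W s \<in> F)
          \<or> (s \<in> NN0 \<and> (W ^^ 2) s \<in> F)
          \<or> (s \<in> NN1 \<and> (W ^^ 2) s \<in> F)
         \<longrightarrow> (\<exists>c \<in> {cx, cy, cu, cv}.
                filterlim (\<lambda>n. c ((W ^^ n) s)) at_top sequentially))"
proof (intro conjI impI)
  assume "s \<in> P0
          \<or> (s \<in> Q4 \<and> (\<exists>k. cy ((W ^^ k) s) * cv ((W ^^ k) s) \<noteq> 0))
          \<or> (s \<in> NN \<and> W s \<in> P0)
          \<or> (s \<in> NN0 \<and> (W ^^ 2) s \<in> P0)
          \<or> (s \<in> NN1 \<and> (W ^^ 2) s \<in> P0)"
  then have "\<exists>j. (W ^^ j) s \<in> P0"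
  proof (elim disjE conjE exE)
    assume "s \<in> P0" then show ?thesis by (intro exI[of _ 0]) simp
  next
    fix k assume "s \<in> Q4" "cy ((W ^^ k) s) * cv ((W ^^ k) s) \<noteq> 0"
    then show ?thesis by (rule Q4_iter)
  next
    assume "W s \<in> P0" then show ?thesis by (intro exI[of _ 1]) simp
  qed (intro exI[of _ 2], simp)+
  then show "((\<lambda>n. (W ^^ n) s) \<longlongrightarrow> (0, 0, 0, 0)) sequentially"
    using conv_shift by blast
next
  assume "s \<in> F
          \<or> (s \<in> NN \<and> W s \<in> F)
          \<or> (s \<in> NN0 \<and> (W ^^ 2) s \<in> F)
          \<or> (s \<in> NN1 \<and> (W ^^ 2) s \<in> F)"
  then have "\<exists>j. (W ^^ j) s \<in> F"
  proof (elim disjE conjE)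
    assume "s \<in> F" then show ?thesis by (intro exI[of _ 0]) simp
  next
    assume "W s \<in> F" then show ?thesis by (intro exI[of _ 1]) simp
  qed (intro exI[of _ 2], simp)+
  then have "filterlim (\<lambda>n. cu ((W ^^ n) s)) at_top sequentially"
    using div_shift by blast
  then show "\<exists>c \<in> {cx, cy, cu, cv}. filterlim (\<lambda>n. c ((W ^^ n) s)) at_top sequentially"
    by blast
qed

end
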